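(* Let $A$ be an integral domain and $E$ an $A$-module such that $aE=a^2E$ for each $a\in A$. Then: (1) if $E$ is torsion-free, then $E$ is divisible; (2) if $A$ is local and $E$ is finitely generated, then $E$ is semisimple; (3) if $A$ is an Archimedean valuation domain, then $E$ is an extension of a divisible module by a semisimple module (i.e. $E$ has a divisible submodule $D$ with $E/D$ semisimple).
   Context: $E$ is divisible if $sE=E$ for every non-zero $s\in A$. A valuation domain is Archimedean if its maximal ideal is its only non-zero prime ideal. *)

theory Defs
  imports Complex_Main
begin

definition is_ideal :: "'a::comm_ring_1 set \<Rightarrow> bool" where
  "is_ideal I \<longleftrightarrow> 0 \<in> I \<and> (\<forall>x\<in>I. \<forall>y\<in>I. x + y \<in> I) \<and> (\<forall>a. \<forall>x\<in>I. a * x \<in> I)"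

definition prime_ideal :: "'a::comm_ring_1 set \<Rightarrow> bool" where
  "prime_ideal P \<longleftrightarrow> is_ideal P \<and> 1 \<notin> P \<and> (\<forall>a b. a * b \<in> P \<longrightarrow> a \<in> P \<or> b \<in> P)"

definition maximal_ideal :: "'a::comm_ring_1 set \<Rightarrow> bool" where
  "maximal_ideal M \<longleftrightarrow> is_ideal M \<and> 1 \<notin> M \<and>
     (\<forall>J. is_ideal J \<and> M \<subseteq> J \<longrightarrow> J = M \<or> J = UNIV)"

definition local_ring :: "'a::comm_ring_1 itself \<Rightarrow> bool" where
  "local_ring _ \<longleftrightarrow> (\<exists>!M::'a set. maximal_ideal M)"

definition valuation_domain :: "'a::idom itself \<Rightarrow> bool" where
  "valuation_domain _ \<longleftrightarrow> (\<forall>a b::'a. a dvd b \<or> b dvd a)"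

definition archimedean_valuation_domain :: "'a::idom itself \<Rightarrow> bool" where
  "archimedean_valuation_domain T \<longleftrightarrow> valuation_domain T \<and>
     (\<forall>P::'a set. prime_ideal P \<and> P \<noteq> {0} \<longrightarrow> maximal_ideal P)"

definition torsion_free :: "('a::comm_ring_1 \<Rightarrow> 'b::ab_group_add \<Rightarrow> 'b) \<Rightarrow> bool" where
  "torsion_free scale \<longleftrightarrow> (\<forall>s x. scale s x = 0 \<longrightarrow> s = 0 \<or> x = 0)"

definition submodule :: "('a::comm_ring_1 \<Rightarrow> 'b::ab_group_add \<Rightarrow> 'b) \<Rightarrow> 'b set \<Rightarrow> bool" where
  "submodule scale S \<longleftrightarrow> module.subspace scale S"

definition divisible_on :: "('a::comm_ring_1 \<Rightarrow> 'b::ab_group_add \<Rightarrow> 'b) \<Rightarrow> 'b set \<Rightarrow> bool" where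
  "divisible_on scale D \<longleftrightarrow> (\<forall>s. s \<noteq> 0 \<longrightarrow> scale s ` D = D)"

definition divisible :: "('a::comm_ring_1 \<Rightarrow> 'b::ab_group_add \<Rightarrow> 'b) \<Rightarrow> bool" where
  "divisible scale \<longleftrightarrow> divisible_on scale UNIV"

definition fin_gen :: "('a::comm_ring_1 \<Rightarrow> 'b::ab_group_add \<Rightarrow> 'b) \<Rightarrow> bool" where
  "fin_gen scale \<longleftrightarrow> (\<exists>F. finite F \<and> module.span scale F = UNIV)"

definition semisimple :: "('a::comm_ring_1 \<Rightarrow> 'b::ab_group_add \<Rightarrow> 'b) \<Rightarrow> bool" where
  "semisimple scale \<longleftrightarrow> (\<forall>S. submodule scale S \<longrightarrow>
     (\<exists>T. submodule scale T \<and> S \<inter> T = {0} \<and> {s + t |s t. s \<in> S \<and> t \<in> T} = UNIV))"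

(* E/D semisimple, expressed through the correspondence between submodules of E/D
   and submodules of E containing D: every submodule S/D of E/D is a direct summand *)
definition semisimple_quotient :: "('a::comm_ring_1 \<Rightarrow> 'b::ab_group_add \<Rightarrow> 'b) \<Rightarrow> 'b set \<Rightarrow> bool" where
  "semisimple_quotient scale D \<longleftrightarrow> (\<forall>S. submodule scale S \<and> D \<subseteq> S \<longrightarrow>
     (\<exists>T. submodule scale T \<and> D \<subseteq> T \<and> S \<inter> T = D \<and>
          {s + t |s t. s \<in> S \<and> t \<in> T} = UNIV))"

end

theory Submission
  imports Defs
begin

context module
begin

lemma complement_exists:
  assumes D: "subspace D"
    and H: "\<And>a x. a dvd 1 \<or> a *s x \<in> D"
    and S: "subspace S" "D \<subseteq> S"
  shows "\<exists>T. subspace T \<and> D \<subseteq> T \<and> S \<inter> T = D \<and> {s + t |s t. s \<in> S \<and> t \<in> T} = UNIV"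
proof -
  define A where "A = {T. subspace T \<and> D \<subseteq> T \<and> S \<inter> T = D}"
  have "\<forall>C\<in>chains A. \<exists>U\<in>A. \<forall>X\<in>C. X \<subseteq> U"
  proof
    fix C assume C: "C \<in> chains A"
    show "\<exists>U\<in>A. \<forall>X\<in>C. X \<subseteq> U"
    proof (cases "C = {}")
      case True
      then show ?thesis using D S unfolding A_def by auto
    next
      case False
      have CA: "C \<subseteq> A" and ch: "\<And>X Y. X \<in> C \<Longrightarrow> Y \<in> C \<Longrightarrow> X \<subseteq> Y \<or> Y \<subseteq> X"
        using C unfolding chains_def chain_subset_def by auto
      have sub: "\<And>X. X \<in> C \<Longrightarrow> subspace X \<and> D \<subseteq> X \<and> S \<inter> X = D" using CA unfolding A_def by auto
      have "subspace (\<Union>C)"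
        unfolding subspace_def
      proof (intro conjI ballI allI)
        obtain X where "X \<in> C" using False by auto
        then show "0 \<in> \<Union>C" using sub subspace_0 by blast
      next
        fix x y assume "x \<in> \<Union>C" "y \<in> \<Union>C"
        then obtain X Y where XY: "X \<in> C" "Y \<in> C" "x \<in> X" "y \<in> Y" by auto
        then show "x + y \<in> \<Union>C"
          using ch[OF XY(1,2)] sub[OF XY(1)] sub[OF XY(2)] subspace_add
          by (metis UnionI subsetD)
      next
        fix c x assume "x \<in> \<Union>C"
        then obtain X where "X \<in> C" "x \<in> X" by auto
        then show "c *s x \<in> \<Union>C" using sub subspace_scale by blast
      qed
      moreover have "D \<subseteq> \<Union>C" using False sub by blast
      moreover have "S \<inter> \<Union>C = D" using False sub by blast
      ultimately show ?thesis unfolding A_def by blast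
    qed
  qed
  from Zorn_Lemma2[OF this] obtain T where TA: "T \<in> A" and Tmax: "\<forall>X\<in>A. T \<subseteq> X \<longrightarrow> X = T"
    by blast
  have T: "subspace T" "D \<subseteq> T" "S \<inter> T = D" using TA unfolding A_def by auto
  have "{s + t |s t. s \<in> S \<and> t \<in> T} = UNIV"
  proof (rule ccontr)
    assume "{s + t |s t. s \<in> S \<and> t \<in> T} \<noteq> UNIV"
    then obtain x where x: "x \<notin> {s + t |s t. s \<in> S \<and> t \<in> T}" by blast
    define T' where "T' = {t + c *s x |t c. t \<in> T}"
    have "subspace T'"
      unfolding subspace_def T'_def
    proof (intro conjI ballI allI)
      show "0 \<in> {t + c *s x |t c. t \<in> T}"
        using subspace_0[OF T(1)] by (intro CollectI exI[of _ 0]) auto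
    next
      fix y z assume "y \<in> {t + c *s x |t c. t \<in> T}" "z \<in> {t + c *s x |t c. t \<in> T}"
      then obtain t1 c1 t2 c2 where "y = t1 + c1 *s x" "z = t2 + c2 *s x" "t1 \<in> T" "t2 \<in> T" by auto
      then show "y + z \<in> {t + c *s x |t c. t \<in> T}"
        using subspace_add[OF T(1)]
        by (intro CollectI exI[of _ "t1 + t2"] exI[of _ "c1 + c2"]) (auto simp: algebra_simps)
    next
      fix c y assume "y \<in> {t + c *s x |t c. t \<in> T}"
      then obtain t1 c1 where "y = t1 + c1 *s x" "t1 \<in> T" by auto
      then show "c *s y \<in> {t + c *s x |t c. t \<in> T}"
        using subspace_scale[OF T(1)]
        by (intro CollectI exI[of _ "c *s t1"] exI[of _ "c * c1"]) (auto simp: algebra_simps)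
    qed
    moreover have TT': "T \<subseteq> T'" unfolding T'_def
    proof
      fix y assume "y \<in> T"
      then show "y \<in> {t + c *s x |t c. t \<in> T}"
        by (intro CollectI exI[of _ y] exI[of _ 0]) auto
    qed
    moreover have "S \<inter> T' \<subseteq> D"
    proof
      fix s assume "s \<in> S \<inter> T'"
      then obtain t c where s: "s \<in> S" "t \<in> T" "s = t + c *s x" unfolding T'_def by auto
      show "s \<in> D"
      proof (cases "c dvd 1")
        case True
        then obtain d where d: "1 = c * d" by (auto elim: dvdE)
        have "x = d *s s + (- (d *s t))"
          using s(3) d by (simp add: algebra_simps mult.commute)
        moreover have "d *s s \<in> S" "- (d *s t) \<in> T"
          using s subspace_scale S(1) T(1) subspace_neg by auto
        ultimately show ?thesis using x by blast
      next
        case False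
        then have "c *s x \<in> D" using H by blast
        then have "s \<in> T" using s T(2) subspace_add[OF T(1)] by auto
        then show ?thesis using s T(3) by auto
      qed
    qed
    ultimately have "T' \<in> A" using T unfolding A_def by auto
    then have "T' = T" using Tmax TT' by blast
    moreover have "x \<in> T'" unfolding T'_def
      using subspace_0[OF T(1)] by (intro CollectI exI[of _ 0] exI[of _ 1]) auto
    ultimately have "x \<in> T" by simp
    then have "x \<in> {s + t |s t. s \<in> S \<and> t \<in> T}"
      using subspace_0[OF S(1)] by (intro CollectI exI[of _ 0] exI[of _ x]) auto
    then show False using x by blast
  qed
  then show ?thesis using T by blast
qed


lemma nakayama:
  assumes "finite F"
    and J: "\<And>c. (1 - a * c) dvd 1"
    and H: "\<forall>x\<in>span F. \<exists>y\<in>span F. a *s x = (a * a) *s y"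
  shows "\<forall>x\<in>span F. a *s x = 0"
  using assms(1) H
proof (induction F rule: finite_induct)
  case empty
  then show ?case by simp
next
  case (insert f F)
  have fin: "f \<in> span (insert f F)" by (rule span_base) simp
  obtain y' where y': "y' \<in> span (insert f F)" "a *s f = (a * a) *s y'"
    using insert.prems fin by blast
  obtain c' where c': "y' - c' *s f \<in> span F" using y'(1) span_insert by blast
  define z' where "z' = y' - c' *s f"
  obtain v where v: "1 = (1 - a * c') * v" using J[of c'] by (metis dvdE)
  have "((1 - a * c') * a) *s f = (a * a) *s z'"
    using y'(2) unfolding z'_def by (simp add: algebra_simps)
  then have "(v * ((1 - a * c') * a)) *s f = (v * (a * a)) *s z'"
    by (metis scale_scale)
  also have "v * ((1 - a * c') * a) = a * ((1 - a * c') * v)" by (simp only: ac_simps)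
  also have "\<dots> = a" using v by simp
  finally have key: "a *s f = (a * a) *s (v *s z')" by (simp add: mult.commute)
  have wF: "v *s z' \<in> span F" using c' z'_def span_scale by simp
  have "\<forall>x\<in>span F. \<exists>y\<in>span F. a *s x = (a * a) *s y"
  proof
    fix x assume x: "x \<in> span F"
    then have "x \<in> span (insert f F)" using span_mono[of F "insert f F"] by blast
    then obtain y where y: "y \<in> span (insert f F)" "a *s x = (a * a) *s y"
      using insert.prems by blast
    obtain c where c: "y - c *s f \<in> span F" using y(1) span_insert by blast
    define z where "z = y - c *s f"
    have "a *s x = (a * a) *s z + (c * a) *s (a *s f)"
      using y(2) unfolding z_def by (simp add: algebra_simps)
    also have "\<dots> = (a * a) *s (z + (c * a) *s (v *s z'))"
      using key by (simp add: algebra_simps mult.commute mult.left_commute)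
    finally show "\<exists>y\<in>span F. a *s x = (a * a) *s y"
      using c z_def wF span_add span_scale by blast
  qed
  then have IH: "\<forall>x\<in>span F. a *s x = 0" using insert.IH by blast
  show ?case
  proof
    fix x assume "x \<in> span (insert f F)"
    then obtain k where k: "x - k *s f \<in> span F" using span_insert by blast
    define u where "u = x - k *s f"
    have "a *s x = a *s u + k *s (a *s f)" unfolding u_def
      by (simp add: algebra_simps mult.commute)
    also have "\<dots> = (k * a) *s (a *s (v *s z'))"
      using IH k u_def key by (simp add: mult.commute mult.left_commute)
    also have "\<dots> = 0"
    proof -
      have "a *s (v *s z') = 0" using IH wF by blast
      then show ?thesis by (metis scale_zero_right)
    qed
    finally show "a *s x = 0" .
  qed
qed

lemma pow_range:
  assumes sq: "\<And>a. range (scale a) = range (scale (a ^ 2))"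
  shows "\<exists>y. b *s x = (b ^ (n + 1)) *s y"
proof (induction n)
  case 0
  then show ?case by auto
next
  case (Suc n)
  then obtain y where y: "b *s x = (b ^ (n + 1)) *s y" by blast
  have "b *s y \<in> range (scale (b ^ 2))" using sq by blast
  then obtain z where z: "b *s y = (b ^ 2) *s z" by auto
  have "b *s x = (b ^ n) *s (b *s y)" using y by (simp add: mult.commute)
  also have "\<dots> = (b ^ (Suc n + 1)) *s z" using z by (simp add: power_add power2_eq_square mult.assoc mult.commute mult.left_commute)
  finally show ?case by blast
qed

lemma range_sub:
  assumes sq: "\<And>a. range (scale a) = range (scale (a ^ 2))"
    and d: "a dvd b ^ n"
  shows "range (scale b) \<subseteq> range (scale a)"
proof
  fix z assume "z \<in> range (scale b)"
  then obtain x where x: "z = b *s x" by auto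
  obtain y where y: "b *s x = (b ^ (n + 1)) *s y" using pow_range[OF sq] by blast
  obtain c where c: "b ^ n = a * c" using d by (auto elim: dvdE)
  have "z = a *s (c *s (b *s y))" using x y c by (simp add: mult.commute mult.left_commute)
  then show "z \<in> range (scale a)" by blast
qed

end


lemma exists_maximal:
  fixes a :: "'a::comm_ring_1"
  assumes na: "\<not> a dvd 1"
  shows "\<exists>M. maximal_ideal M \<and> a \<in> M"
proof -
  define A where "A = {I::'a set. is_ideal I \<and> 1 \<notin> I \<and> a \<in> I}"
  have aA: "range (\<lambda>b. a * b) \<in> A"
    unfolding A_def is_ideal_def
  proof (intro CollectI conjI ballI allI)
    show "0 \<in> range ((*) a)" by (intro range_eqI[of _ _ 0]) simp
    show "x + y \<in> range ((*) a)" if "x \<in> range ((*) a)" "y \<in> range ((*) a)" for x y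
      using that by (auto simp: distrib_left[symmetric])
    show "c * x \<in> range ((*) a)" if xr: "x \<in> range ((*) a)" for c x
    proof -
      obtain y where "x = a * y" using xr by blast
      then have "c * x = a * (c * y)" by (simp add: ac_simps)
      then show ?thesis by blast
    qed
    show "1 \<notin> range ((*) a)" using na by (auto simp: dvd_def)
    show "a \<in> range ((*) a)" by (intro range_eqI[of _ _ 1]) simp
  qed
  have "\<forall>C\<in>chains A. \<exists>U\<in>A. \<forall>X\<in>C. X \<subseteq> U"
  proof
    fix C assume C: "C \<in> chains A"
    show "\<exists>U\<in>A. \<forall>X\<in>C. X \<subseteq> U"
    proof (cases "C = {}")
      case True
      then show ?thesis using aA by auto
    next
      case False
      have CA: "C \<subseteq> A" and ch: "\<And>X Y. X \<in> C \<Longrightarrow> Y \<in> C \<Longrightarrow> X \<subseteq> Y \<or> Y \<subseteq> X"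
        using C unfolding chains_def chain_subset_def by auto
      have sub: "\<And>X. X \<in> C \<Longrightarrow> is_ideal X \<and> 1 \<notin> X \<and> a \<in> X" using CA unfolding A_def by auto
      have "is_ideal (\<Union>C)"
        unfolding is_ideal_def
      proof (intro conjI ballI allI)
        obtain X where "X \<in> C" using False by auto
        then show "0 \<in> \<Union>C" using sub unfolding is_ideal_def by blast
      next
        fix x y assume "x \<in> \<Union>C" "y \<in> \<Union>C"
        then obtain X Y where XY: "X \<in> C" "Y \<in> C" "x \<in> X" "y \<in> Y" by auto
        then show "x + y \<in> \<Union>C"
          using ch[OF XY(1,2)] sub[OF XY(1)] sub[OF XY(2)] unfolding is_ideal_def
          by (metis UnionI subsetD)
      next
        fix c x assume "x \<in> \<Union>C"
        then obtain X where "X \<in> C" "x \<in> X" by auto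
        then show "c * x \<in> \<Union>C" using sub unfolding is_ideal_def by blast
      qed
      moreover have "1 \<notin> \<Union>C" "a \<in> \<Union>C" using False sub by auto
      ultimately show ?thesis unfolding A_def by blast
    qed
  qed
  from Zorn_Lemma2[OF this] obtain M where MA: "M \<in> A" and Mmax: "\<forall>X\<in>A. M \<subseteq> X \<longrightarrow> X = M"
    by blast
  have "maximal_ideal M"
    unfolding maximal_ideal_def
  proof (intro conjI allI impI)
    show "is_ideal M" "1 \<notin> M" using MA unfolding A_def by auto
    fix J assume J: "is_ideal J \<and> M \<subseteq> J"
    show "J = M \<or> J = UNIV"
    proof (cases "1 \<in> J")
      case True
      then have "\<forall>x. x * 1 \<in> J" using J unfolding is_ideal_def by blast
      then show ?thesis by auto
    next
      case False
      then have "J \<in> A" using J MA unfolding A_def by auto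
      then show ?thesis using Mmax J by blast
    qed
  qed
  then show ?thesis using MA unfolding A_def by blast
qed

lemma local_units:
  fixes a :: "'a::comm_ring_1"
  assumes "local_ring TYPE('a)" and "\<not> a dvd 1"
  shows "(1 - a * c) dvd 1"
proof (rule ccontr)
  assume n: "\<not> (1 - a * c) dvd 1"
  obtain M1 where M1: "maximal_ideal M1" "a \<in> M1" using exists_maximal assms(2) by blast
  obtain M2 where M2: "maximal_ideal M2" "1 - a * c \<in> M2" using exists_maximal n by blast
  have "M1 = M2" using assms(1) M1 M2 unfolding local_ring_def by blast
  then have I: "is_ideal M1" "a \<in> M1" "1 - a * c \<in> M1" "1 \<notin> M1"
    using M1 M2 unfolding maximal_ideal_def by auto
  then have "c * a \<in> M1" unfolding is_ideal_def by blast
  then have "(1 - a * c) + c * a \<in> M1" using I unfolding is_ideal_def by blast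
  then show False using I by (simp add: ac_simps)
qed

lemma arch_dvd:
  fixes a b :: "'a::idom"
  assumes arch: "archimedean_valuation_domain TYPE('a)"
    and a: "a \<noteq> 0" and b: "b \<noteq> 0" "\<not> b dvd 1"
  shows "\<exists>n. a dvd b ^ n"
proof (rule ccontr)
  assume nn: "\<not> (\<exists>n. a dvd b ^ n)"
  have val: "\<And>x y::'a. x dvd y \<or> y dvd x"
    using arch unfolding archimedean_valuation_domain_def valuation_domain_def by blast
  define P where "P = {x. \<forall>n. b ^ n dvd x}"
  have aP: "a \<in> P" using nn val unfolding P_def by blast
  have idP: "is_ideal P" unfolding is_ideal_def P_def by auto
  have oneP: "1 \<notin> P"
  proof
    assume "1 \<in> P"
    then have "b ^ 1 dvd 1" unfolding P_def by blast
    then show False using b by simp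
  qed
  have "\<forall>x y. x * y \<in> P \<longrightarrow> x \<in> P \<or> y \<in> P"
  proof (intro allI impI)
    fix x y assume xy: "x * y \<in> P"
    show "x \<in> P \<or> y \<in> P"
    proof (rule ccontr)
      assume "\<not> (x \<in> P \<or> y \<in> P)"
      then obtain i j where "\<not> b ^ i dvd x" "\<not> b ^ j dvd y" unfolding P_def by auto
      then have "x dvd b ^ i" "y dvd b ^ j" using val by blast+
      then have "x * y dvd b ^ i * b ^ j" by (rule mult_dvd_mono)
      moreover have "b ^ (i + j + 1) dvd x * y" using xy unfolding P_def by blast
      ultimately have "b ^ (i + j + 1) dvd b ^ (i + j)"
        by (simp add: power_add dvd_trans)
      then have "b ^ (i + j) * b dvd b ^ (i + j) * 1" by simp
      then have "b dvd 1" using b(1) by (subst (asm) dvd_mult_cancel_left) auto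
      then show False using b by blast
    qed
  qed
  then have "prime_ideal P" using idP oneP unfolding prime_ideal_def by blast
  moreover have "P \<noteq> {0}" using aP a by blast
  ultimately have maxP: "maximal_ideal P" using arch unfolding archimedean_valuation_domain_def by blast
  define J where "J = {p + b * r |p r. p \<in> P}"
  have "is_ideal J"
    unfolding is_ideal_def J_def
  proof (intro conjI ballI allI)
    show "0 \<in> {p + b * r |p r. p \<in> P}" using idP unfolding is_ideal_def
      by (intro CollectI exI[of _ 0]) auto
    fix x y assume "x \<in> {p + b * r |p r. p \<in> P}" "y \<in> {p + b * r |p r. p \<in> P}"
    then obtain p1 r1 p2 r2 where "x = p1 + b * r1" "y = p2 + b * r2" "p1 \<in> P" "p2 \<in> P" by auto
    then show "x + y \<in> {p + b * r |p r. p \<in> P}" using idP unfolding is_ideal_def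
      by (intro CollectI exI[of _ "p1 + p2"] exI[of _ "r1 + r2"]) (auto simp: algebra_simps)
  next
    fix c x assume "x \<in> {p + b * r |p r. p \<in> P}"
    then obtain p1 r1 where "x = p1 + b * r1" "p1 \<in> P" by auto
    then show "c * x \<in> {p + b * r |p r. p \<in> P}" using idP unfolding is_ideal_def
      by (intro CollectI exI[of _ "c * p1"] exI[of _ "c * r1"]) (auto simp: algebra_simps)
  qed
  moreover have "P \<subseteq> J" unfolding J_def
  proof
    fix y assume "y \<in> P"
    then show "y \<in> {p + b * r |p r. p \<in> P}" by (intro CollectI exI[of _ y] exI[of _ 0]) auto
  qed
  ultimately have "J = P \<or> J = UNIV" using maxP unfolding maximal_ideal_def by blast
  moreover have "b \<in> J" unfolding J_def using idP unfolding is_ideal_def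
    by (intro CollectI exI[of _ 0] exI[of _ 1]) auto
  moreover have "b \<notin> P"
  proof
    assume "b \<in> P"
    then have "b ^ 2 dvd b" unfolding P_def by blast
    then have "b * b dvd b * 1" by (simp add: power2_eq_square)
    then show False using b by (subst (asm) dvd_mult_cancel_left) auto
  qed
  moreover have "1 \<notin> J"
  proof
    assume "1 \<in> J"
    then obtain p r where "1 = p + b * r" "p \<in> P" unfolding J_def by auto
    moreover have "b ^ 1 dvd p" using \<open>p \<in> P\<close> unfolding P_def by blast
    ultimately have "b dvd p + b * r" by (intro dvd_add) auto
    then have "b dvd 1" using \<open>1 = p + b * r\<close> by simp
    then show False using b by blast
  qed
  ultimately show False by blast
qed


theorem proposition2p4:
  fixes scale :: "'a::idom \<Rightarrow> 'b::ab_group_add \<Rightarrow> 'b"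
  assumes "module scale"
    and "\<And>a. range (scale a) = range (scale (a ^ 2))"
  shows "(torsion_free scale \<longrightarrow> divisible scale) \<and>
         (local_ring TYPE('a) \<and> fin_gen scale \<longrightarrow> semisimple scale) \<and>
         (archimedean_valuation_domain TYPE('a) \<longrightarrow>
           (\<exists>D. submodule scale D \<and> divisible_on scale D \<and> semisimple_quotient scale D))"
proof (intro conjI impI)
  interpret M: module scale by fact
  note sq = assms(2)
  show "divisible scale" if tf: "torsion_free scale"
    unfolding divisible_def divisible_on_def
  proof (intro allI impI)
    fix s :: 'a assume s: "s \<noteq> 0"
    have "x \<in> range (scale s)" for x
    proof -
      have "scale s x \<in> range (scale (s ^ 2))" using sq by blast
      then obtain y where y: "scale s x = scale (s ^ 2) y" by auto
      have "scale s (x - scale s y) = 0" using y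
        by (simp add: M.scale_right_diff_distrib power2_eq_square)
      then have "x - scale s y = 0" using tf s unfolding torsion_free_def by blast
      then have "x = scale s y" by simp
      then show ?thesis by blast
    qed
    then show "scale s ` UNIV = UNIV" by auto
  qed
  show "semisimple scale" if lf: "local_ring TYPE('a) \<and> fin_gen scale"
  proof -
    obtain F where F: "finite F" "M.span F = UNIV" using lf unfolding fin_gen_def by blast
    have H: "a dvd 1 \<or> scale a x \<in> {0}" for a x
    proof (cases "a dvd 1")
      case False
      have J: "\<And>c. (1 - a * c) dvd 1" using local_units lf False by blast
      have "\<forall>x\<in>M.span F. \<exists>y\<in>M.span F. scale a x = scale (a * a) y"
      proof
        fix x
        have "scale a x \<in> range (scale (a ^ 2))" using sq by blast
        then show "\<exists>y\<in>M.span F. scale a x = scale (a * a) y"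
          using F(2) by (auto simp: power2_eq_square)
      qed
      then have "\<forall>x\<in>M.span F. scale a x = 0" using M.nakayama[OF F(1) J] by blast
      then show ?thesis using F(2) by auto
    qed simp
    show ?thesis
      unfolding semisimple_def submodule_def
    proof (intro allI impI)
      fix S assume S: "M.subspace S"
      have "{0} \<subseteq> S" using S M.subspace_0 by auto
      then show "\<exists>T. M.subspace T \<and> S \<inter> T = {0} \<and> {s + t |s t. s \<in> S \<and> t \<in> T} = UNIV"
        using M.complement_exists[OF M.subspace_single_0 H S] by blast
    qed
  qed
  show "\<exists>D. submodule scale D \<and> divisible_on scale D \<and> semisimple_quotient scale D"
    if arch: "archimedean_valuation_domain TYPE('a)"
  proof (cases "\<exists>m::'a. m \<noteq> 0 \<and> \<not> m dvd 1")
    case False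
    have sd: "submodule scale UNIV" unfolding submodule_def by simp
    have dv: "divisible_on scale UNIV"
      unfolding divisible_on_def
    proof (intro allI impI)
      fix s :: 'a assume "s \<noteq> 0"
      then have "s dvd 1" using False by blast
      then obtain t where t: "1 = s * t" by (metis dvdE)
      have "x \<in> range (scale s)" for x
      proof -
        have "x = scale s (scale t x)" using t by simp
        then show ?thesis by blast
      qed
      then show "scale s ` UNIV = UNIV" by blast
    qed
    have sq': "semisimple_quotient scale UNIV"
      unfolding semisimple_quotient_def submodule_def
    proof (intro allI impI)
      fix S assume S: "M.subspace S \<and> UNIV \<subseteq> S"
      have H: "\<And>a x. a dvd 1 \<or> scale a x \<in> UNIV" by simp
      show "\<exists>T. M.subspace T \<and> UNIV \<subseteq> T \<and> S \<inter> T = UNIV \<and> {s + t |s t. s \<in> S \<and> t \<in> T} = UNIV"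
        using M.complement_exists[OF M.subspace_UNIV H] S by blast
    qed
    show ?thesis using sd dv sq' by blast
  next
    case True
    then obtain m :: 'a where m: "m \<noteq> 0" "\<not> m dvd 1" by blast
    define D where "D = range (scale m)"
    have subD: "M.subspace D"
      unfolding M.subspace_def D_def
    proof (intro conjI ballI allI)
      show "0 \<in> range (scale m)" by (intro range_eqI[of _ _ 0]) simp
      fix x y assume "x \<in> range (scale m)" "y \<in> range (scale m)"
      then obtain u v where "x = scale m u" "y = scale m v" by blast
      then have "x + y = scale m (u + v)" by (simp add: M.scale_right_distrib)
      then show "x + y \<in> range (scale m)" by blast
    next
      fix c x assume "x \<in> range (scale m)"
      then obtain u where "x = scale m u" by blast
      then have "scale c x = scale m (scale c u)" by (simp add: mult.commute)
      then show "scale c x \<in> range (scale m)" by blast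
    qed
    have incl: "range (scale m) \<subseteq> range (scale a)" if an: "a \<noteq> 0" "\<not> a dvd 1" for a
    proof -
      obtain n where "a dvd m ^ n" using arch_dvd[OF arch an(1) m] by blast
      then show ?thesis using M.range_sub[OF sq] by blast
    qed
    have incl2: "range (scale a) \<subseteq> range (scale m)" if an: "a \<noteq> 0" "\<not> a dvd 1" for a
    proof -
      obtain n where "m dvd a ^ n" using arch_dvd[OF arch m(1) an] by blast
      then show ?thesis using M.range_sub[OF sq] by blast
    qed
    have dv: "divisible_on scale D"
      unfolding divisible_on_def
    proof (intro allI impI)
      fix s :: 'a assume s: "s \<noteq> 0"
      show "scale s ` D = D"
      proof
        show "scale s ` D \<subseteq> D" unfolding D_def
        proof
          fix z assume "z \<in> scale s ` range (scale m)"
          then obtain u where "z = scale s (scale m u)" by blast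
          then have "z = scale m (scale s u)" by (simp add: mult.commute)
          then show "z \<in> range (scale m)" by blast
        qed
        show "D \<subseteq> scale s ` D" unfolding D_def
        proof
          fix z assume z: "z \<in> range (scale m)"
          then obtain u where u: "z = scale m u" by blast
          show "z \<in> scale s ` range (scale m)"
          proof (cases "s dvd 1")
            case True
            then obtain t where t: "1 = s * t" by (metis dvdE)
            have "z = scale s (scale m (scale t u))" using u t by (simp add: ac_simps)
            then show ?thesis by blast
          next
            case False
            have "s * m \<noteq> 0" using s m by simp
            moreover have "\<not> (s * m) dvd 1" using False dvd_mult_left by blast
            ultimately have "z \<in> range (scale (s * m))" using incl z by blast
            then obtain y where "z = scale (s * m) y" by blast
            then have "z = scale s (scale m y)" by simp
            then show ?thesis by blast
          qed
        qed
      qed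
    qed
    have H: "a dvd 1 \<or> scale a x \<in> D" for a x
    proof (cases "a = 0")
      case True
      then show ?thesis unfolding D_def by (auto intro: range_eqI[of _ _ 0])
    next
      case False
      then show ?thesis using incl2[OF False] unfolding D_def by blast
    qed
    have sq': "semisimple_quotient scale D"
      unfolding semisimple_quotient_def submodule_def
    proof (intro allI impI)
      fix S assume S: "M.subspace S \<and> D \<subseteq> S"
      show "\<exists>T. M.subspace T \<and> D \<subseteq> T \<and> S \<inter> T = D \<and> {s + t |s t. s \<in> S \<and> t \<in> T} = UNIV"
        using M.complement_exists[OF subD H] S by blast
    qed
    show ?thesis using subD dv sq' unfolding submodule_def by blast
  qed
qed

end
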